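(* For every $\alpha\in(0,1)$, the function $\beta\mapsto 1/v(\beta)$ is convex on $(1,1/\alpha)$, where $v(\beta)$ is given by $$\frac1{v(\beta)}=\frac{\beta+1}{\beta-1}+\frac{1-\alpha}{1+\alpha}\left(\frac{\beta+3}{2(\beta-1)}+\frac{\beta(\beta+1)}{(\beta-1)^2}(s_+-s_-)+C\,s_-\right),$$ with $s_+=\frac{1-\alpha}{1-\alpha\beta}$, $s_-=\frac{1-\alpha}{1-\alpha/\beta}$, $C=\frac{2\beta}{\beta-1}-\frac{\beta-\alpha}{\beta-\alpha^2}$. Consequently $v$ is a unimodal function of $\beta$ on $(1,1/\alpha)$ (nondecreasing up to some $\beta_{\max}$ and nonincreasing thereafter), with $v(\beta)\to0$ as $\beta\downarrow1$ and as $\beta\uparrow1/\alpha$.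
   Context: Here $v(\beta)$ is the asymptotic speed of the biased random walk on the random spanning tree of the ladder graph with parameter $\alpha=c+1-\sqrt{c^2+2c}$, as given by the displayed formula for $\beta\in(1,1/\alpha)$. *)

theory Defs
  imports "HOL-Analysis.Analysis"
begin

definition s_plus :: "real \<Rightarrow> real \<Rightarrow> real" where
  "s_plus \<alpha> \<beta> = (1 - \<alpha>) / (1 - \<alpha> * \<beta>)"

definition s_minus :: "real \<Rightarrow> real \<Rightarrow> real" where
  "s_minus \<alpha> \<beta> = (1 - \<alpha>) / (1 - \<alpha> / \<beta>)"

definition C_const :: "real \<Rightarrow> real \<Rightarrow> real" where
  "C_const \<alpha> \<beta> = 2 * \<beta> / (\<beta> - 1) - (\<beta> - \<alpha>) / (\<beta> - \<alpha>\<^sup>2)"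

definition inv_speed :: "real \<Rightarrow> real \<Rightarrow> real" where
  "inv_speed \<alpha> \<beta> =
     (\<beta> + 1) / (\<beta> - 1)
     + (1 - \<alpha>) / (1 + \<alpha>) *
       ((\<beta> + 3) / (2 * (\<beta> - 1))
        + \<beta> * (\<beta> + 1) / (\<beta> - 1)\<^sup>2 * (s_plus \<alpha> \<beta> - s_minus \<alpha> \<beta>)
        + C_const \<alpha> \<beta> * s_minus \<alpha> \<beta>)"

definition speed :: "real \<Rightarrow> real \<Rightarrow> real" where
  "speed \<alpha> \<beta> = 1 / inv_speed \<alpha> \<beta>"

end

theory Submission imports Defs begin

definition Q :: "real \<Rightarrow> real \<Rightarrow> real \<Rightarrow> real" where
  "Q c p x = c / (x - p)"

definition PP :: "real \<Rightarrow> real \<Rightarrow> real" where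
 "PP a b = (3+a)/(2*(1+a)) + Q ((6+2*a)/(1+a)) 1 b + Q (-1/a) (1/a) b
    + Q (-(a^2*(3-a)/(1+a))) a b + Q (-(a^2*(1-a)^2/(1+a))) (a^2) b"

definition R :: "real \<Rightarrow> real \<Rightarrow> real \<Rightarrow> real" where
  "R c p x = - c / (x - p)^2"

definition PP1 :: "real \<Rightarrow> real \<Rightarrow> real" where
 "PP1 a b = R ((6+2*a)/(1+a)) 1 b + R (-1/a) (1/a) b
    + R (-(a^2*(3-a)/(1+a))) a b + R (-(a^2*(1-a)^2/(1+a))) (a^2) b"

definition PP2 :: "real \<Rightarrow> real \<Rightarrow> real" where
 "PP2 a b = 2*((6+2*a)/(1+a))/(b-1)^3 + 2*(-1/a)/(b-1/a)^3
    + 2*(-(a^2*(3-a)/(1+a)))/(b-a)^3 + 2*(-(a^2*(1-a)^2/(1+a)))/(b-a^2)^3"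

lemma Q_deriv: "x \<noteq> p \<Longrightarrow> DERIV (Q c p) x :> -c/(x-p)^2"
  unfolding Q_def
  by (auto intro!: derivative_eq_intros simp: power2_eq_square)

lemma Q1_deriv: "x \<noteq> p \<Longrightarrow> DERIV (R c p) x :> 2*c/(x-p)^3"
  unfolding R_def by (auto intro!: derivative_eq_intros simp: divide_simps eval_nat_numeral; simp add: algebra_simps)

lemma inv_speed_eq:
  assumes a: "0 < a" "a < 1" and b: "1 < b" "b < 1/a"
  shows "inv_speed a b = PP a b"
proof -
  have ab: "a*b < 1" using b a by (simp add: field_simps)
  have a2: "a^2 < 1" using a by (simp add: power_less_one_iff)
  have h1: "b - 1 \<noteq> 0" "1 - a*b \<noteq> 0" "b - a \<noteq> 0" "b - a^2 \<noteq> 0" "1 + a \<noteq> 0" "b \<noteq> 0" "a \<noteq> 0"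
    "b - 1/a \<noteq> 0"
    using a b ab a2 by auto
  have sm: "s_minus a b = (1-a)*b/(b-a)"
    unfolding s_minus_def using h1 by (simp add: divide_simps; simp add: algebra_simps)
  have e: "s_plus a b - s_minus a b = a*(1-a)*(b-1)*(b+1)/((1-a*b)*(b-a))"
    unfolding sm s_plus_def using h1 by (simp add: divide_simps; simp add: algebra_simps)
  have t3: "b * (b + 1) / (b - 1)\<^sup>2 * (s_plus a b - s_minus a b) = a*b*(1-a)*(b+1)^2/((b-1)*(1-a*b)*(b-a))"
    unfolding e using h1 by (simp add: divide_simps power2_eq_square; simp add: algebra_simps)
  have t4: "C_const a b * s_minus a b = 2*(1-a)*b^2/((b-1)*(b-a)) - (1-a)*b/(b-a^2)"
    unfolding sm C_const_def using h1 by (simp add: divide_simps power2_eq_square; simp add: algebra_simps)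
  have q: "Q (-1/a) (1/a) b = 1/(1-a*b)"
    unfolding Q_def using h1 by (simp add: divide_simps; simp add: algebra_simps)
  have "inv_speed a b = (b+1)/(b-1) + (1-a)/(1+a)*((b+3)/(2*(b-1)) + a*b*(1-a)*(b+1)^2/((b-1)*(1-a*b)*(b-a))
     + (2*(1-a)*b^2/((b-1)*(b-a)) - (1-a)*b/(b-a^2)))"
    unfolding inv_speed_def t3 t4 by simp
  also have "\<dots> = PP a b"
    unfolding PP_def q unfolding Q_def using h1
    by (simp add: divide_simps power2_eq_square; simp add: algebra_simps)
  finally show ?thesis .
qed

lemma PP_deriv:
  assumes a: "0 < a" "a < 1" and b: "1 < b" "b < 1/a"
  shows "DERIV (PP a) b :> PP1 a b" "DERIV (PP1 a) b :> PP2 a b"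
proof -
  have ab: "a*b < 1" using b a by (simp add: field_simps)
  have a2: "a^2 < 1" using a by (simp add: power_less_one_iff)
  have h1: "b \<noteq> 1" "b \<noteq> a" "b \<noteq> a^2" "b \<noteq> 1/a"
    using a b ab a2 by auto
  show "DERIV (PP a) b :> PP1 a b"
    unfolding PP_def[abs_def] PP1_def
    by (rule derivative_eq_intros Q_deriv h1 | simp add: R_def)+
  show "DERIV (PP1 a) b :> PP2 a b"
    unfolding PP1_def[abs_def] PP2_def
    apply (rule derivative_eq_intros Q1_deriv h1 | simp)+
    done
qed

lemma PP2_nonneg:
  assumes a: "0 < a" "a < 1" and b: "1 < b" "b < 1/a"
  shows "0 \<le> PP2 a b"
proof -
  have ab: "a*b < 1" using b a by (simp add: field_simps)
  have a2: "a^2 < a" using a by (simp add: power2_eq_square)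
  define A where "A = (6+2*a)/(1+a)"
  define D where "D = -(a^2*(3-a)/(1+a))"
  define E where "E = -(a^2*(1-a)^2/(1+a))"
  have D0: "D \<le> 0" unfolding D_def using a by simp
  have E0: "E \<le> 0" unfolding E_def using a by simp
  have p1: "0 < (b-1)^3" using b by simp
  have hB: "0 \<le> 2*(-1/a)/(b-1/a)^3"
  proof -
    have "b - 1/a < 0" using b by simp
    hence "(b-1/a)^3 < 0" by (simp add: power_less_zero_eq)
    moreover have "2*(-1/a) < 0" using a by simp
    ultimately show ?thesis by (intro divide_nonpos_neg) auto
  qed
  have hD: "2*D/(b-1)^3 \<le> 2*D/(b-a)^3"
    by (rule divide_left_mono_neg) (use a b p1 D0 in \<open>auto intro!: power_mono mult_pos_pos\<close>)
  have hE: "2*E/(b-1)^3 \<le> 2*E/(b-a^2)^3"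
    by (rule divide_left_mono_neg) (use a a2 b p1 E0 in \<open>auto intro!: power_mono mult_pos_pos\<close>)
  have s1: "a^2*(3-a) \<le> 3"
  proof -
    have "a^2 \<le> 1" using a a2 by simp
    moreover have "3 - a \<le> 3" using a by simp
    ultimately show ?thesis using a by (metis mult_mono mult_1 zero_le_power2 less_imp_le diff_ge_0_iff_ge a(2) order_trans one_le_numeral)
  qed
  have s2: "a^2*(1-a)^2 \<le> 1"
  proof -
    have "(a*(1-a))^2 \<le> 1" using a by (intro power_le_one) (auto simp: mult_le_one)
    thus ?thesis by (simp add: power_mult_distrib)
  qed
  have ADE: "0 \<le> A + D + E"
    unfolding A_def D_def E_def using a s1 s2 by (simp add: divide_simps)
  have "0 \<le> 2*(A+D+E)/(b-1)^3" using ADE p1 by simp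
  also have "\<dots> = 2*A/(b-1)^3 + 2*D/(b-1)^3 + 2*E/(b-1)^3" by (simp add: add_divide_distrib algebra_simps)
  also have "\<dots> \<le> 2*A/(b-1)^3 + 2*D/(b-a)^3 + 2*E/(b-a^2)^3" using hD hE by simp
  finally have "0 \<le> 2*A/(b-1)^3 + 2*D/(b-a)^3 + 2*E/(b-a^2)^3" .
  moreover have "PP2 a b = 2*A/(b-1)^3 + 2*(-1/a)/(b-1/a)^3 + 2*D/(b-a)^3 + 2*E/(b-a^2)^3"
    unfolding PP2_def A_def D_def E_def by (rule refl)
  ultimately show ?thesis using hB by linarith
qed

lemma inv_speed_pos:
  assumes a: "0 < a" "a < 1" and b: "1 < b" "b < 1/a"
  shows "0 < inv_speed a b"
proof -
  have ab: "a*b < 1" using b a by (simp add: field_simps)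
  have a2: "a^2 < a" using a by (simp add: power2_eq_square)
  have ba: "a < b" using a b by simp
  have bb: "1 < b*b" using b by (metis less_1_mult)
  have sm: "0 < s_minus a b" unfolding s_minus_def using a b ba by (simp add: field_simps)
  have sp: "s_minus a b < s_plus a b"
  proof -
    have "s_minus a b = (1-a)*b/(b-a)" unfolding s_minus_def using a b ba by (simp add: divide_simps)
    also have "\<dots> < (1-a)/(1-a*b)" using a b ba ab bb by (simp add: divide_simps) (simp add: algebra_simps)
    finally show ?thesis unfolding s_plus_def .
  qed
  have C: "0 < C_const a b"
  proof -
    have "(b-a)/(b-a^2) < 1" using a2 ba by (simp add: divide_simps)
    moreover have "1 < 2*b/(b-1)" using b by (simp add: divide_simps)
    ultimately show ?thesis unfolding C_const_def by simp
  qed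
  have "0 < (b + 3) / (2 * (b - 1)) + b * (b + 1) / (b - 1)\<^sup>2 * (s_plus a b - s_minus a b) + C_const a b * s_minus a b"
    using b sp sm C by (intro add_pos_pos add_pos_nonneg mult_nonneg_nonneg) auto
  moreover have "0 < (b+1)/(b-1)" using b by simp
  moreover have "0 < (1-a)/(1+a)" using a by simp
  ultimately show ?thesis unfolding inv_speed_def
    by - (rule add_pos_pos, assumption, rule mult_pos_pos, assumption+)
qed

lemma lim_right: "0 < (c::real) \<Longrightarrow> LIM x at_right p. c/(x-p) :> at_top"
proof -
  assume c: "0 < c"
  have "LIM x at_right 0. c * inverse x :> at_top"
    by (rule filterlim_tendsto_pos_mult_at_top[OF tendsto_const c filterlim_inverse_at_top_right])
  thus ?thesis unfolding filterlim_at_right_to_0[of _ _ p] by (simp add: divide_inverse)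
qed

lemma lim_left: "0 < (c::real) \<Longrightarrow> LIM x at_left p. c/(p-x) :> at_top"
proof -
  assume c: "0 < c"
  have "LIM x at_right (-p). c/(x-(-p)) :> at_top" by (rule lim_right[OF c])
  thus ?thesis unfolding filterlim_at_left_to_right[of _ _ p] by (simp add: add.commute)
qed

lemma conv_left:
  fixes f :: "real \<Rightarrow> real"
  assumes "convex_on I f" "m \<in> I" "\<forall>z\<in>I. f m \<le> f z" "x \<in> I" "x \<le> y" "y \<le> m"
  shows "f y \<le> f x"
proof (cases "x = y")
  case False
  hence xy: "x < y" using assms by simp
  define t where "t = (y - x)/(m - x)"
  have t: "0 \<le> t" "t \<le> 1" unfolding t_def using xy assms by (auto simp: divide_simps)
  have "(1 - t) *\<^sub>R x + t *\<^sub>R m = y" unfolding t_def using xy assms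
    by (simp add: divide_simps; simp add: algebra_simps)
  hence "f y \<le> (1 - t) * f x + t * f m" using convex_onD[OF assms(1) t assms(4) assms(2)] by simp
  also have "\<dots> \<le> (1 - t) * f x + t * f x" using assms t by (intro add_left_mono mult_left_mono) auto
  finally show ?thesis by (simp add: algebra_simps)
qed simp

lemma conv_right:
  fixes f :: "real \<Rightarrow> real"
  assumes "convex_on I f" "m \<in> I" "\<forall>z\<in>I. f m \<le> f z" "y \<in> I" "x \<le> y" "m \<le> x"
  shows "f x \<le> f y"
proof (cases "x = y")
  case False
  hence xy: "x < y" using assms by simp
  define t where "t = (y - x)/(y - m)"
  have t: "0 \<le> t" "t \<le> 1" unfolding t_def using xy assms by (auto simp: divide_simps)
  have "(1 - t) *\<^sub>R y + t *\<^sub>R m = x" unfolding t_def using xy assms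
    by (simp add: divide_simps; simp add: algebra_simps)
  hence "f x \<le> (1 - t) * f y + t * f m" using convex_onD[OF assms(1) t assms(4) assms(2)] by simp
  also have "\<dots> \<le> (1 - t) * f y + t * f y" using assms t by (intro add_left_mono mult_left_mono) auto
  finally show ?thesis by (simp add: algebra_simps)
qed simp

lemma inv_speed_lim_right:
  assumes a: "0 < a" "a < 1"
  shows "LIM x at_right 1. inv_speed a x :> at_top"
proof -
  define G where "G x = (3+a)/(2*(1+a)) + Q (-1/a) (1/a) x
    + Q (-(a^2*(3-a)/(1+a))) a x + Q (-(a^2*(1-a)^2/(1+a))) (a^2) x" for x
  have a2: "a^2 < 1" using a by (simp add: power_less_one_iff)
  have aa: "a*a < 1" using mult_strict_left_mono[of a 1 a] a by (simp add: less_trans[of _ a 1])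
  have "(G \<longlongrightarrow> G 1) (at_right 1)" unfolding G_def Q_def
    using a a2 aa by (intro tendsto_intros) auto
  moreover have "LIM x at_right 1. ((6+2*a)/(1+a))/(x-1) :> at_top"
    using a by (intro lim_right) simp
  ultimately have "LIM x at_right 1. G x + ((6+2*a)/(1+a))/(x-1) :> at_top"
    by (rule filterlim_tendsto_add_at_top)
  moreover have "eventually (\<lambda>x. G x + ((6+2*a)/(1+a))/(x-1) = inv_speed a x) (at_right 1)"
    unfolding eventually_at_right_field
  proof (intro exI[of _ "1/a"] conjI allI impI)
    show "1 < 1/a" using a by simp
    fix y assume "1 < y" "y < 1/a"
    thus "G y + ((6+2*a)/(1+a))/(y-1) = inv_speed a y"
      using inv_speed_eq[OF a] unfolding PP_def G_def Q_def by simp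
  qed
  ultimately show ?thesis by (rule filterlim_cong[OF refl refl, THEN iffD1, rotated])
qed

lemma inv_speed_lim_left:
  assumes a: "0 < a" "a < 1"
  shows "LIM x at_left (1/a). inv_speed a x :> at_top"
proof -
  define G where "G x = (3+a)/(2*(1+a)) + Q ((6+2*a)/(1+a)) 1 x
    + Q (-(a^2*(3-a)/(1+a))) a x + Q (-(a^2*(1-a)^2/(1+a))) (a^2) x" for x
  have a2: "a^2 < a" using a by (simp add: power2_eq_square)
  have aa: "a*a < 1" using mult_strict_left_mono[of a 1 a] a by (simp add: less_trans[of _ a 1])
  have aa2: "a*a^2 < 1" using mult_strict_left_mono[of "a^2" 1 a] a a2 by (simp add: less_trans[of _ a 1])
  have ia: "1 < 1/a" "a < 1/a" "a^2 < 1/a" using a a2 aa aa2 by (auto simp: field_simps)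
  have "(G \<longlongrightarrow> G (1/a)) (at_left (1/a))" unfolding G_def Q_def
    using ia by (intro tendsto_intros) auto
  moreover have "LIM x at_left (1/a). (1/a)/(1/a-x) :> at_top"
    using a by (intro lim_left) simp
  ultimately have "LIM x at_left (1/a). G x + (1/a)/(1/a-x) :> at_top"
    by (rule filterlim_tendsto_add_at_top)
  moreover have "eventually (\<lambda>x. G x + (1/a)/(1/a-x) = inv_speed a x) (at_left (1/a))"
    unfolding eventually_at_left_field
  proof (intro exI[of _ "1"] conjI allI impI)
    show "1 < 1/a" using a by simp
    fix y assume y: "1 < y" "y < 1/a"
    have "Q (-1/a) (1/a) y = (1/a)/(1/a-y)" unfolding Q_def using y by (simp add: divide_simps)
    thus "G y + (1/a)/(1/a-y) = inv_speed a y"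
      using inv_speed_eq[OF a y] unfolding PP_def G_def by simp
  qed
  ultimately show ?thesis by (rule filterlim_cong[OF refl refl, THEN iffD1, rotated])
qed

theorem mainTheorem2:
  fixes \<alpha> :: real
  assumes "0 < \<alpha>" and "\<alpha> < 1"
  shows "convex_on {1<..<1/\<alpha>} (\<lambda>\<beta>. 1 / speed \<alpha> \<beta>)
    \<and> (\<exists>\<beta>max \<in> {1<..<1/\<alpha>}.
          mono_on {1<..\<beta>max} (speed \<alpha>) \<and> antimono_on {\<beta>max..<1/\<alpha>} (speed \<alpha>))
    \<and> (speed \<alpha> \<longlongrightarrow> 0) (at_right 1)
    \<and> (speed \<alpha> \<longlongrightarrow> 0) (at_left (1/\<alpha>))"
proof -
  note a = assms
  define I where "I = {1<..<1/\<alpha>}"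
  define f where "f = inv_speed \<alpha>"
  have fI: "\<And>y. y \<in> I \<Longrightarrow> PP \<alpha> y = f y"
    unfolding I_def f_def using inv_speed_eq[OF a] by simp
  have openI: "open I" unfolding I_def by simp
  have d1: "DERIV f x :> PP1 \<alpha> x" if "x \<in> I" for x
    using has_field_derivative_transform_within_open[OF PP_deriv(1)[OF a] openI that fI] that
    unfolding I_def by auto
  have d2: "DERIV (PP1 \<alpha>) x :> PP2 \<alpha> x" if "x \<in> I" for x
    using PP_deriv(2)[OF a] that unfolding I_def by auto
  have conv: "convex_on I f"
    by (rule f''_ge0_imp_convex[OF _ d1 d2]) (auto simp: I_def intro!: PP2_nonneg[OF a])
  have inv: "(\<lambda>\<beta>. 1 / speed \<alpha> \<beta>) = f" unfolding f_def speed_def by auto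
  have spd: "speed \<alpha> = (\<lambda>x. inverse (f x))" unfolding f_def speed_def
    by (auto simp: divide_inverse)
  have pos: "\<And>x. x \<in> I \<Longrightarrow> 0 < f x" unfolding f_def I_def using inv_speed_pos[OF a] by auto
  have cont: "continuous_on I f"
    using d1 by (intro continuous_at_imp_continuous_on) (auto intro: DERIV_isCont)
  have limR: "LIM x at_right 1. f x :> at_top" unfolding f_def by (rule inv_speed_lim_right[OF a])
  have limL: "LIM x at_left (1/\<alpha>). f x :> at_top" unfolding f_def by (rule inv_speed_lim_left[OF a])
  define c where "c = (1 + 1/\<alpha>)/2"
  have ia: "1 < 1/\<alpha>" using a by simp
  have cI: "1 < c" "c < 1/\<alpha>" unfolding c_def using ia by auto
  have "eventually (\<lambda>x. f c + 1 \<le> f x) (at_right 1)" using limR by (simp add: filterlim_at_top)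
  then obtain l where l: "l > 1" "\<And>y. 1 < y \<Longrightarrow> y < l \<Longrightarrow> f c + 1 \<le> f y"
    unfolding eventually_at_right_field by blast
  have "eventually (\<lambda>x. f c + 1 \<le> f x) (at_left (1/\<alpha>))" using limL by (simp add: filterlim_at_top)
  then obtain u where u: "u < 1/\<alpha>" "\<And>y. u < y \<Longrightarrow> y < 1/\<alpha> \<Longrightarrow> f c + 1 \<le> f y"
    unfolding eventually_at_left_field by blast
  define lo where "lo = min c ((1+l)/2)"
  define hi where "hi = max c ((u+1/\<alpha>)/2)"
  have lo1: "1 < lo" unfolding lo_def using cI l by auto
  have hi1: "hi < 1/\<alpha>" unfolding hi_def using cI u by auto
  have sub: "{lo..hi} \<subseteq> I" unfolding I_def using lo1 hi1 by auto
  have clh: "c \<in> {lo..hi}" unfolding lo_def hi_def by auto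
  obtain m where m: "m \<in> {lo..hi}" "\<forall>y\<in>{lo..hi}. f m \<le> f y"
    using continuous_attains_inf[of "{lo..hi}" f] clh continuous_on_subset[OF cont sub] by auto
  have mI: "m \<in> I" using m sub by auto
  have glob: "\<forall>z\<in>I. f m \<le> f z"
  proof
    fix z assume z: "z \<in> I"
    have fcm: "f m \<le> f c" using m clh by auto
    show "f m \<le> f z"
    proof (cases "z < lo")
      case True
      hence "z < l" unfolding lo_def using l by auto
      thus ?thesis using l(2)[of z] z fcm unfolding I_def by auto
    next
      case False
      show ?thesis
      proof (cases "hi < z")
        case True
        hence "u < z" unfolding hi_def using u by auto
        thus ?thesis using u(2)[of z] z fcm unfolding I_def by auto
      next
        case False
        thus ?thesis using \<open>\<not> z < lo\<close> m by auto
      qed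
    qed
  qed
  have mono: "mono_on {1<..m} (speed \<alpha>)"
  proof (rule monotone_onI)
    fix x y assume xy: "x \<in> {1<..m}" "y \<in> {1<..m}" "x \<le> y"
    have xI: "x \<in> I" "y \<in> I" using xy mI unfolding I_def by auto
    have "f y \<le> f x" by (rule conv_left[OF conv mI glob xI(1)]) (use xy in auto)
    thus "speed \<alpha> x \<le> speed \<alpha> y" unfolding spd using pos[OF xI(2)] by (simp add: le_imp_inverse_le)
  qed
  have amono: "antimono_on {m..<1/\<alpha>} (speed \<alpha>)"
  proof (rule monotone_onI)
    fix x y assume xy: "x \<in> {m..<1/\<alpha>}" "y \<in> {m..<1/\<alpha>}" "x \<le> y"
    have xI: "x \<in> I" "y \<in> I" using xy mI unfolding I_def by auto
    have "f x \<le> f y" by (rule conv_right[OF conv mI glob xI(2)]) (use xy in auto)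
    thus "speed \<alpha> y \<le> speed \<alpha> x" unfolding spd using pos[OF xI(1)] by (simp add: le_imp_inverse_le)
  qed
  have l1: "(speed \<alpha> \<longlongrightarrow> 0) (at_right 1)" unfolding spd by (rule tendsto_inverse_0_at_top[OF limR])
  have l2: "(speed \<alpha> \<longlongrightarrow> 0) (at_left (1/\<alpha>))" unfolding spd by (rule tendsto_inverse_0_at_top[OF limL])
  show ?thesis using conv inv mono amono l1 l2 mI unfolding I_def by auto
qed

end
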